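(* Let $B,W,T$ be positive integers with $W\ge B+1$ and let $T_{\mathrm{eff}}=\min(W-1,T)$. For the channel $\mathcal{C}(N=1,B,W)$ there exists a streaming code with delay $T$ and rate \[ R=\begin{cases}\frac{T_{\mathrm{eff}}}{T_{\mathrm{eff}}+B}, & T_{\mathrm{eff}}\ge B,\\ 0, & \text{else}.\end{cases} \]
   Context: Channel $\mathcal{C}(N,B,W)$: a packet erasure channel on channel uses $i=0,1,2,\dots$ such that in every sliding window of $W$ consecutive channel uses the erased positions form either a single burst of length at most $B$ or at most $N$ arbitrary erasures (for $N=1$: at most one burst of length at most $B$ per window). Streaming code: at time $i$ the encoder observes $\mathbf{s}[i]\in\mathbb{F}_q^k$ and transmits $\mathbf{x}[i]=f_i(\mathbf{s}[0],\dots,\mathbf{s}[i])\in\mathbb{F}_q^n$; outputs are $\mathbf{y}[i]\in\{\mathbf{x}[i],\star\}$. Delay $T$ means $\mathbf{s}[i]=g_i(\mathbf{y}[0],\dots,\mathbf{y}[i+T])$ for all $i$, all sources and all admissible erasure patterns. Rate $R=k/n$. *)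

theory Defs
  imports Complex_Main "HOL-Number_Theory.Prime_Powers"
begin

text \<open>Symbols of F_q^m, represented (as sets) by length-m words over the alphabet {0..<q}.
  Encoder and decoder are arbitrary functions, so only the underlying sets matter.\<close>
definition alph :: "nat \<Rightarrow> nat \<Rightarrow> nat list set" where
  "alph q m = {v. length v = m \<and> set v \<subseteq> {..<q}}"

definition admissible_burst :: "nat \<Rightarrow> nat \<Rightarrow> (nat \<Rightarrow> bool) \<Rightarrow> bool" where
  "admissible_burst B W E \<longleftrightarrow>
     (\<forall>i. \<exists>j l. l \<le> B \<and> {t. i \<le> t \<and> t < i + W \<and> E t} = {j..<j + l})"

definition channel_out :: "(nat \<Rightarrow> bool) \<Rightarrow> (nat \<Rightarrow> nat list) \<Rightarrow> nat \<Rightarrow> nat list option" where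
  "channel_out E x i = (if E i then None else Some (x i))"

definition streaming_code ::
  "nat \<Rightarrow> nat \<Rightarrow> nat \<Rightarrow> nat \<Rightarrow> nat \<Rightarrow> nat \<Rightarrow>
   (nat \<Rightarrow> (nat \<Rightarrow> nat list) \<Rightarrow> nat list) \<Rightarrow>
   (nat \<Rightarrow> (nat \<Rightarrow> nat list option) \<Rightarrow> nat list) \<Rightarrow> bool" where
  "streaming_code q k n B W T f g \<longleftrightarrow>
     \<comment> \<open>encoder causality: x[i] depends only on s[0..i]\<close>
     (\<forall>i s s'. (\<forall>j\<le>i. s j = s' j) \<longrightarrow> f i s = f i s') \<and>
     \<comment> \<open>encoder outputs lie in F_q^n\<close>
     (\<forall>i s. (\<forall>j. s j \<in> alph q k) \<longrightarrow> f i s \<in> alph q n) \<and>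
     \<comment> \<open>decoder g_i depends only on y[0..i+T]\<close>
     (\<forall>i y y'. (\<forall>j\<le>i + T. y j = y' j) \<longrightarrow> g i y = g i y') \<and>
     \<comment> \<open>zero-error recovery with delay T for all sources and admissible patterns\<close>
     (\<forall>s E. (\<forall>j. s j \<in> alph q k) \<longrightarrow> admissible_burst B W E \<longrightarrow>
        (\<forall>i. g i (channel_out E (\<lambda>j. f j s)) = s i))"

end

theory Submission imports Defs begin

function G :: "nat \<Rightarrow> nat \<Rightarrow> nat \<Rightarrow> nat \<Rightarrow> bool" where
  "G T B p r = (if B = 0 then False
     else if p < T div B * B then r = p mod B
     else if T mod B = 0 then False
     else G B (T mod B) r (p - T div B * B))"
  by auto
termination by (relation "measure (\<lambda>(T,B,p,r). B)") auto

declare G.simps[simp del]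

definition xs :: "nat set \<Rightarrow> (nat \<Rightarrow> bool) \<Rightarrow> bool" where
  "xs A f = odd (card {x\<in>A. f x})"

definition Rw where "Rw T B p e = xs {..<B} (\<lambda>r. G T B p r \<and> e r)"
definition Cl where "Cl T B r h = xs {..<T} (\<lambda>p. G T B p r \<and> h p)"

lemma xs_single:
  assumes "finite A" "{x\<in>A. f x} \<subseteq> {z}"
  shows "xs A f = (z \<in> A \<and> f z)"
proof (cases "z \<in> A \<and> f z")
  case True
  then have "{x\<in>A. f x} = {z}" using assms(2) by auto
  then show ?thesis using True by (simp add: xs_def)
next
  case False
  then have e: "{x\<in>A. f x} = {}" using assms(2) by auto
  show ?thesis using False unfolding xs_def e by simp
qed

lemma xs_none: assumes "\<And>x. x \<in> A \<Longrightarrow> \<not> f x" shows "\<not> xs A f"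
proof -
  have e: "{x\<in>A. f x} = {}" using assms by auto
  show ?thesis unfolding xs_def e by simp
qed

lemma xs_split: "xs {..<c+b} f = (xs {..<c} f \<noteq> xs {..<b} (\<lambda>i. f (c+i)))"
proof -
  have e: "{x\<in>{..<c+b}. f x} = {x\<in>{..<c}. f x} \<union> (\<lambda>i. c+i) ` {i\<in>{..<b}. f (c+i)}"
  proof (rule set_eqI)
    fix x
    show "(x \<in> {x\<in>{..<c+b}. f x}) = (x \<in> {x\<in>{..<c}. f x} \<union> (\<lambda>i. c+i) ` {i\<in>{..<b}. f (c+i)})"
    proof (cases "x < c")
      case True then show ?thesis by auto
    next
      case False
      then have "x = c + (x - c)" by simp
      then show ?thesis using False by (auto simp: image_iff intro!: exI[of _ "x - c"])
    qed
  qed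
  have "card {x\<in>{..<c+b}. f x} = card {x\<in>{..<c}. f x} + card ((\<lambda>i. c+i) ` {i\<in>{..<b}. f (c+i)})"
    unfolding e by (rule card_Un_disjoint) auto
  also have "card ((\<lambda>i. c+i) ` {i\<in>{..<b}. f (c+i)}) = card {i\<in>{..<b}. f (c+i)}"
    by (rule card_image) auto
  finally show ?thesis by (simp add: xs_def)
qed

lemma window_res: "0 < B \<Longrightarrow> x < B \<Longrightarrow> \<exists>p. s \<le> p \<and> p < s+B \<and> p mod B = (x::nat)"
proof -
  assume B: "0 < B" "x < B"
  show ?thesis
  proof (cases "s mod B \<le> x")
    case True
    have d: "s div B * B + s mod B = s" by simp
    have 1: "s \<le> s div B * B + x" using True d by linarith
    have 2: "s div B * B + x < s + B" using True d B by linarith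
    have 3: "(s div B * B + x) mod B = x" using B by simp
    show ?thesis using 1 2 3 by blast
  next
    case False
    have d: "s div B * B + s mod B = s" by simp
    have m: "s mod B < B" using B by simp
    have e: "(s div B + 1) * B = s div B * B + B" by (simp add: algebra_simps)
    have 1: "s \<le> (s div B + 1) * B + x" unfolding e using False d m by linarith
    have 2: "(s div B + 1) * B + x < s + B" unfolding e using False d by linarith
    have 3: "((s div B + 1) * B + x) mod B = x"
      by (subst add.commute, subst mod_mult_self1) (simp add: B)
    show ?thesis using 1 2 3 by blast
  qed
qed

lemma window_uniq:
  assumes "s \<le> p" "p < s + B" "s \<le> p'" "p' < s + B" "p mod B = p' mod (B::nat)"
  shows "p = p'"
proof -
  have k: "x = y" if xy: "x \<le> y" "s \<le> x" "y < s + B" "x mod B = y mod B" for x y :: nat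
  proof -
    have "B dvd (y - x)" using xy mod_eq_dvd_iff_nat by metis
    moreover have "y - x < B" using xy by linarith
    ultimately have "\<not> 0 < y - x" using dvd_imp_le by fastforce
    then show "x = y" using xy(1) by linarith
  qed
  show ?thesis
  proof (cases "p \<le> p'")
    case True then show ?thesis using k assms by blast
  next
    case False then show ?thesis using k[of p' p] assms by simp
  qed
qed

lemma G_per: "0 < B \<Longrightarrow> p < T div B * B \<Longrightarrow> G T B p r = (r = p mod B)"
  by (subst G.simps) auto

lemma G_tail: "0 < B \<Longrightarrow> i < T mod B \<Longrightarrow> G T B (T div B * B + i) r = G B (T mod B) r i"
  by (subst G.simps) auto

lemma Rw_per: "0 < B \<Longrightarrow> p < T div B * B \<Longrightarrow> Rw T B p e = e (p mod B)"
  unfolding Rw_def by (subst xs_single[where z="p mod B"]) (auto simp: G_per)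

lemma Rw_tail: "0 < B \<Longrightarrow> i < T mod B \<Longrightarrow> Rw T B (T div B * B + i) e = Cl B (T mod B) i e"
  unfolding Rw_def Cl_def by (simp add: G_tail)

lemma Cl_split: "0 < B \<Longrightarrow> Cl T B r h =
   (xs {..<T div B * B} (\<lambda>p. p mod B = r \<and> h p) \<noteq> Rw B (T mod B) r (\<lambda>i. h (T div B * B + i)))"
proof -
  assume B: "0 < B"
  have T: "T = T div B * B + T mod B" by simp
  have "Cl T B r h = xs {..<T div B * B + T mod B} (\<lambda>p. G T B p r \<and> h p)"
    unfolding Cl_def using T by simp
  also have "\<dots> = (xs {..<T div B * B} (\<lambda>p. G T B p r \<and> h p) \<noteq>
        xs {..<T mod B} (\<lambda>i. G T B (T div B * B + i) r \<and> h (T div B * B + i)))"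
    by (rule xs_split)
  also have "xs {..<T div B * B} (\<lambda>p. G T B p r \<and> h p) = xs {..<T div B * B} (\<lambda>p. p mod B = r \<and> h p)"
    unfolding xs_def using B by (intro arg_cong[where f="\<lambda>S. odd (card S)"]) (auto simp: G_per)
  also have "xs {..<T mod B} (\<lambda>i. G T B (T div B * B + i) r \<and> h (T div B * B + i))
       = Rw B (T mod B) r (\<lambda>i. h (T div B * B + i))"
    unfolding Rw_def xs_def using B by (intro arg_cong[where f="\<lambda>S. odd (card S)"]) (auto simp: G_tail)
  finally show ?thesis .
qed


definition "propP T B = (\<forall>m e. m \<le> B \<longrightarrow> (\<forall>x. e x \<longrightarrow> x < m) \<longrightarrow> (\<forall>p<m. \<not> Rw T B p e) \<longrightarrow> (\<forall>x. \<not> e x))"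
definition "propPT T B = (\<forall>m h. m \<le> B \<longrightarrow> (\<forall>x. h x \<longrightarrow> x < m) \<longrightarrow> (\<forall>r<m. \<not> Cl T B r h) \<longrightarrow> (\<forall>x. \<not> h x))"
definition "propW T B = (\<forall>s e. s + B \<le> T \<longrightarrow> (\<forall>x. e x \<longrightarrow> x < B) \<longrightarrow>
    (\<forall>p. s \<le> p \<longrightarrow> p < s + B \<longrightarrow> \<not> Rw T B p e) \<longrightarrow> (\<forall>x. \<not> e x))"
definition "propWT T B = (\<forall>s h. s + B \<le> T \<longrightarrow> (\<forall>x. h x \<longrightarrow> s \<le> x \<and> x < s + B) \<longrightarrow>
    (\<forall>r<B. \<not> Cl T B r h) \<longrightarrow> (\<forall>x. \<not> h x))"
definition "propS T B = (\<forall>m e. m \<le> B \<longrightarrow> (\<forall>x. e x \<longrightarrow> B - m \<le> x \<and> x < B) \<longrightarrow>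
    (\<forall>p. T - m \<le> p \<longrightarrow> p < T \<longrightarrow> \<not> Rw T B p e) \<longrightarrow> (\<forall>x. \<not> e x))"
definition "propST T B = (\<forall>m h. m \<le> B \<longrightarrow> (\<forall>x. h x \<longrightarrow> T - m \<le> x \<and> x < T) \<longrightarrow>
    (\<forall>r. B - m \<le> r \<longrightarrow> r < B \<longrightarrow> \<not> Cl T B r h) \<longrightarrow> (\<forall>x. \<not> h x))"

lemma propPD: "propP T B \<Longrightarrow> m \<le> B \<Longrightarrow> (\<forall>x. e x \<longrightarrow> x < m) \<Longrightarrow> (\<forall>p<m. \<not> Rw T B p e) \<Longrightarrow> \<not> e x"
  unfolding propP_def by blast
lemma propPTD: "propPT T B \<Longrightarrow> m \<le> B \<Longrightarrow> (\<forall>x. h x \<longrightarrow> x < m) \<Longrightarrow> (\<forall>r<m. \<not> Cl T B r h) \<Longrightarrow> \<not> h x"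
  unfolding propPT_def by blast
lemma propWD: "propW T B \<Longrightarrow> s + B \<le> T \<Longrightarrow> (\<forall>x. e x \<longrightarrow> x < B) \<Longrightarrow>
    (\<forall>p. s \<le> p \<longrightarrow> p < s + B \<longrightarrow> \<not> Rw T B p e) \<Longrightarrow> \<not> e x"
  unfolding propW_def by blast
lemma propWTD: "propWT T B \<Longrightarrow> s + B \<le> T \<Longrightarrow> (\<forall>x. h x \<longrightarrow> s \<le> x \<and> x < s + B) \<Longrightarrow>
    (\<forall>r<B. \<not> Cl T B r h) \<Longrightarrow> \<not> h x"
  unfolding propWT_def by blast
lemma propSD: "propS T B \<Longrightarrow> m \<le> B \<Longrightarrow> (\<forall>x. e x \<longrightarrow> B - m \<le> x \<and> x < B) \<Longrightarrow>
    (\<forall>p. T - m \<le> p \<longrightarrow> p < T \<longrightarrow> \<not> Rw T B p e) \<Longrightarrow> \<not> e x"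
  unfolding propS_def by blast
lemma propSTD: "propST T B \<Longrightarrow> m \<le> B \<Longrightarrow> (\<forall>x. h x \<longrightarrow> T - m \<le> x \<and> x < T) \<Longrightarrow>
    (\<forall>r. B - m \<le> r \<longrightarrow> r < B \<longrightarrow> \<not> Cl T B r h) \<Longrightarrow> \<not> h x"
  unfolding propST_def by blast

lemma basics:
  fixes B T :: nat
  assumes "0 < B" "B \<le> T"
  shows "B \<le> T div B * B" "T = T div B * B + T mod B" "T mod B < B"
    "\<And>x. x < B \<Longrightarrow> (T div B * B - B + x) mod B = x"
    "\<And>p. T div B * B - B \<le> p \<Longrightarrow> p < T div B * B \<Longrightarrow> p mod B = p - (T div B * B - B)"
proof -
  have c1: "1 \<le> T div B" using assms div_greater_zero_iff[of T B] by simp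
  then show B: "B \<le> T div B * B" by (metis mult_1 mult_le_mono1)
  show "T = T div B * B + T mod B" by simp
  show "T mod B < B" using assms by simp
  have e: "T div B * B - B = (T div B - 1) * B" by (simp add: diff_mult_distrib)
  show "(T div B * B - B + x) mod B = x" if "x < B" for x
    unfolding e using that by (metis add.commute mod_less mod_mult_self1)
  show "p mod B = p - (T div B * B - B)" if "T div B * B - B \<le> p" "p < T div B * B" for p
  proof -
    have "p = (T div B * B - B) + (p - (T div B * B - B))" using that by simp
    moreover have "p - (T div B * B - B) < B" using that B by linarith
    ultimately show ?thesis unfolding e by (metis add.commute mod_less mod_mult_self1)
  qed
qed

lemma Cmod: "k < B \<Longrightarrow> (T div B * B + k) mod B = (k::nat)"
  by (metis add.commute mod_less mod_mult_self1)

lemma propP_step: assumes "0 < B" "B \<le> T" shows "propP T B"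
  unfolding propP_def
proof (intro allI impI)
  fix m e x assume m: "m \<le> B" and s: "\<forall>x. e x \<longrightarrow> x < m" and r: "\<forall>p<m. \<not> Rw T B p e"
  show "\<not> e x"
  proof
    assume ex: "e x"
    then have "x < m" using s by auto
    moreover have "x < T div B * B" using \<open>x < m\<close> m basics(1)[OF assms] by linarith
    ultimately have "\<not> e (x mod B)" using r Rw_per[OF assms(1)] by metis
    then show False using ex \<open>x < m\<close> m by simp
  qed
qed

lemma propPT_step: assumes "0 < B" "B \<le> T" shows "propPT T B"
  unfolding propPT_def
proof (intro allI impI)
  fix m h x assume m: "m \<le> B" and s: "\<forall>x. h x \<longrightarrow> x < m" and r: "\<forall>r<m. \<not> Cl T B r h"
  show "\<not> h x"
  proof
    assume hx: "h x"
    then have xm: "x < m" using s by auto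
    let ?C = "T div B * B"
    have CB: "B \<le> ?C" using basics(1)[OF assms] .
    have t: "\<not> Rw B (T mod B) x (\<lambda>i. h (?C + i))"
      unfolding Rw_def
    proof (rule xs_none)
      fix i
      have "\<not> h (?C + i)"
      proof
        assume "h (?C + i)"
        then have "?C + i < m" using s by blast
        then show False using m CB by linarith
      qed
      then show "\<not> (G B (T mod B) x i \<and> h (?C + i))" by simp
    qed
    have "xs {..<?C} (\<lambda>p. p mod B = x \<and> h p) = (x \<in> {..<?C} \<and> x mod B = x \<and> h x)"
      by (rule xs_single) (use s m in auto)
    then have "xs {..<?C} (\<lambda>p. p mod B = x \<and> h p)" using hx xm m CB by simp
    then have "Cl T B x h" using Cl_split[OF assms(1)] t by simp
    then show False using r xm by auto
  qed
qed


lemma propW_step: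
  assumes B: "0 < B" "B \<le> T" and IH: "0 < T mod B \<Longrightarrow> propPT B (T mod B)"
  shows "propW T B"
  unfolding propW_def
proof (intro allI impI)
  fix s e x
  assume sT: "s + B \<le> T" and se: "\<forall>x. e x \<longrightarrow> x < B"
    and r: "\<forall>p. s \<le> p \<longrightarrow> p < s + B \<longrightarrow> \<not> Rw T B p e"
  define C where "C = T div B * B"
  define b where "b = T mod B"
  have CB: "B \<le> C" and TC: "T = C + b" and bB: "b < B"
    using basics[OF B] unfolding C_def b_def by auto
  have A: "C + y < s + B" if "e y" for y
  proof -
    have yB: "y < B" using se that by auto
    obtain p where p: "s \<le> p" "p < s + B" "p mod B = y" using window_res[OF B(1) yB] by blast
    have "\<not> p < C"
    proof
      assume "p < C"
      then have "Rw T B p e = e y" using Rw_per[OF B(1)] p unfolding C_def by simp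
      then show False using r p that by auto
    qed
    then have "p = C + (p - C)" by simp
    moreover have "p - C < B" using p sT TC bB by linarith
    ultimately have "p mod B = p - C" unfolding C_def by (metis Cmod)
    then show ?thesis using p \<open>\<not> p < C\<close> by simp
  qed
  show "\<not> e x"
  proof
    assume ex: "e x"
    then have "C + x < s + B" using A by blast
    then have sb: "0 < s + B - C" "s + B - C \<le> b" using sT TC by linarith+
    then have b0: "0 < b" by linarith
    have "propPT B b" using IH b0 unfolding b_def by simp
    moreover have "\<forall>r<s + B - C. \<not> Cl B b r e"
    proof (intro allI impI)
      fix i assume i: "i < s + B - C"
      have "i < b" using i sb by linarith
      then have "Rw T B (C + i) e = Cl B b i e" using Rw_tail[OF B(1)] unfolding C_def b_def by simp
      moreover have "s \<le> C + i" "C + i < s + B" using i sT TC bB by linarith+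
      then have "\<not> Rw T B (C + i) e" using r by blast
      ultimately show "\<not> Cl B b i e" by simp
    qed
    moreover have "\<forall>y. e y \<longrightarrow> y < s + B - C"
    proof (intro allI impI)
      fix y assume "e y" then have "C + y < s + B" by (rule A)
      then show "y < s + B - C" by linarith
    qed
    ultimately show False using ex sb unfolding propPT_def by blast
  qed
qed


lemma propWT_step:
  assumes B: "0 < B" "B \<le> T" and IH: "0 < T mod B \<Longrightarrow> propP B (T mod B)"
  shows "propWT T B"
  unfolding propWT_def
proof (intro allI impI)
  fix s h x
  assume sT: "s + B \<le> T" and sh: "\<forall>x. h x \<longrightarrow> s \<le> x \<and> x < s + B"
    and r: "\<forall>r<B. \<not> Cl T B r h"
  define C where "C = T div B * B"
  define b where "b = T mod B"
  have CB: "B \<le> C" and TC: "T = C + b" and bB: "b < B"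
    using basics[OF B] unfolding C_def b_def by auto
  have pm: "p mod B = p - (C - B)" if "C - B \<le> p" "p < C" for p
    using basics(5)[OF B] that unfolding C_def by simp
  have CS: "Cl T B r h = (xs {..<C} (\<lambda>p. p mod B = r \<and> h p) \<noteq> Rw B b r (\<lambda>i. h (C + i)))" for r
    using Cl_split[OF B(1)] unfolding C_def b_def by simp
  have tail0: "\<forall>i. \<not> h (C + i)"
  proof (cases "C < s + B")
    case False
    show ?thesis
    proof (intro allI notI)
      fix i assume "h (C + i)"
      then have "C + i < s + B" using sh by blast
      then show False using False by linarith
    qed
  next
    case True
    define sg where "sg = s + B - C"
    have sg: "0 < sg" "sg \<le> b" "s = C - B + sg" using True sT TC CB unfolding sg_def by linarith+
    have "propP B b" using IH sg unfolding b_def by simp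
    moreover have "\<forall>i. h (C + i) \<longrightarrow> i < sg"
    proof (intro allI impI)
      fix i assume "h (C + i)"
      then have "C + i < s + B" using sh by blast
      then show "i < sg" unfolding sg_def by linarith
    qed
    moreover have "\<forall>r<sg. \<not> Rw B b r (\<lambda>i. h (C + i))"
    proof (intro allI impI)
      fix rr assume rr: "rr < sg"
      have "\<not> xs {..<C} (\<lambda>p. p mod B = rr \<and> h p)"
      proof (rule xs_none)
        fix p assume "p \<in> {..<C}"
        show "\<not> (p mod B = rr \<and> h p)"
        proof
          assume a: "p mod B = rr \<and> h p"
          then have "s \<le> p" "p < C" using sh \<open>p \<in> {..<C}\<close> by auto
          then have "p mod B = p - (C - B)" using pm sg by simp
          then show False using a \<open>s \<le> p\<close> sg rr by linarith
        qed
      qed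
      moreover have "rr < B" using rr sg bB by linarith
      then have "\<not> Cl T B rr h" using r by blast
      ultimately show "\<not> Rw B b rr (\<lambda>i. h (C + i))" using CS[of rr] by simp
    qed
    ultimately have "\<not> h (C + i)" for i
      using sg bB propPD[of B b sg "\<lambda>i. h (C + i)" i] by blast
    then show ?thesis by blast
  qed
  show "\<not> h x"
  proof
    assume hx: "h x"
    have "\<not> C \<le> x"
    proof
      assume "C \<le> x" then have "x = C + (x - C)" by simp
      then show False using tail0 hx by metis
    qed
    then have xC: "x < C" by simp
    have Rw0: "\<not> Rw B b (x mod B) (\<lambda>i. h (C + i))"
      unfolding Rw_def by (rule xs_none) (use tail0 in simp)
    have "xs {..<C} (\<lambda>p. p mod B = x mod B \<and> h p) = (x \<in> {..<C} \<and> x mod B = x mod B \<and> h x)"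
    proof (rule xs_single)
      show "{p \<in> {..<C}. p mod B = x mod B \<and> h p} \<subseteq> {x}"
      proof
        fix p assume "p \<in> {p \<in> {..<C}. p mod B = x mod B \<and> h p}"
        then have "p mod B = x mod B" "h p" by auto
        moreover have "s \<le> p" "p < s + B" "s \<le> x" "x < s + B" using sh hx \<open>h p\<close> by auto
        ultimately have "p = x" using window_uniq[of s p B x] by blast
        then show "p \<in> {x}" by simp
      qed
    qed simp
    then have "Cl T B (x mod B) h" using CS Rw0 hx xC by simp
    then show False using r B(1) by simp
  qed
qed


lemma propS_step:
  assumes B: "0 < B" "B \<le> T" and IH1: "0 < T mod B \<Longrightarrow> propST B (T mod B)"
    and IH2: "0 < T mod B \<Longrightarrow> propWT B (T mod B)"
  shows "propS T B"
  unfolding propS_def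
proof (intro allI impI)
  fix m e x
  assume mB: "m \<le> B" and se: "\<forall>x. e x \<longrightarrow> B - m \<le> x \<and> x < B"
    and r: "\<forall>p. T - m \<le> p \<longrightarrow> p < T \<longrightarrow> \<not> Rw T B p e"
  define C where "C = T div B * B"
  define b where "b = T mod B"
  have CB: "B \<le> C" and TC: "T = C + b" and bB: "b < B"
    using basics[OF B] unfolding C_def b_def by auto
  have cm: "(C - B + y) mod B = y" if "y < B" for y
    using basics(4)[OF B] that unfolding C_def by simp
  have RT: "Rw T B (C + i) e = Cl B b i e" if "i < b" for i
    using Rw_tail[OF B(1)] that unfolding C_def b_def by simp
  show "\<not> e x"
  proof (cases "m \<le> b")
    case True
    show ?thesis
    proof (cases "m = 0")
      case True
      show ?thesis
      proof
        assume "e x" then have "B - m \<le> x" "x < B" using se by auto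
        then show False using True by simp
      qed
    next
      case False
      then have b0: "0 < b" using \<open>m \<le> b\<close> by linarith
      have "\<forall>rr. b - m \<le> rr \<longrightarrow> rr < b \<longrightarrow> \<not> Cl B b rr e"
      proof (intro allI impI)
        fix rr assume "b - m \<le> rr" "rr < b"
        then have "T - m \<le> C + rr" "C + rr < T" using TC by linarith+
        then have "\<not> Rw T B (C + rr) e" using r by blast
        then show "\<not> Cl B b rr e" using RT[OF \<open>rr < b\<close>] by simp
      qed
      then show ?thesis using propSTD[of B b m e x] IH1 b0 True se unfolding b_def by blast
    qed
  next
    case False
    have hi: "\<not> e y" if "B - m + b \<le> y" "y < B" for y
    proof -
      have "T - m \<le> C - B + y" "C - B + y < C" using that TC CB mB by linarith+
      then have "\<not> Rw T B (C - B + y) e" using r TC by simp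
      moreover have "Rw T B (C - B + y) e = e y"
        using Rw_per[OF B(1)] \<open>C - B + y < C\<close> cm[OF \<open>y < B\<close>] unfolding C_def by simp
      ultimately show ?thesis by simp
    qed
    show ?thesis
    proof (cases "b = 0")
      case True
      show ?thesis
      proof
        assume "e x" then have "B - m \<le> x" "x < B" using se by auto
        then show False using hi[of x] True \<open>e x\<close> by simp
      qed
    next
      case b0: False
      have "\<forall>y. e y \<longrightarrow> B - m \<le> y \<and> y < B - m + b"
      proof (intro allI impI)
        fix y assume "e y" then show "B - m \<le> y \<and> y < B - m + b" using hi se by (meson not_le)
      qed
      moreover have "\<forall>rr<b. \<not> Cl B b rr e"
      proof (intro allI impI)
        fix rr assume "rr < b"
        then have "T - m \<le> C + rr" "C + rr < T" using TC False by linarith+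
        then have "\<not> Rw T B (C + rr) e" using r by blast
        then show "\<not> Cl B b rr e" using RT[OF \<open>rr < b\<close>] by simp
      qed
      moreover have "B - m + b \<le> B" using False mB by linarith
      ultimately show ?thesis using propWTD[of B b "B - m" e x] IH2 b0 unfolding b_def by blast
    qed
  qed
qed

lemma propST_step:
  assumes B: "0 < B" "B \<le> T" and IH1: "0 < T mod B \<Longrightarrow> propS B (T mod B)"
    and IH2: "0 < T mod B \<Longrightarrow> propW B (T mod B)"
  shows "propST T B"
  unfolding propST_def
proof (intro allI impI)
  fix m h x
  assume mB: "m \<le> B" and sh: "\<forall>x. h x \<longrightarrow> T - m \<le> x \<and> x < T"
    and r: "\<forall>rr. B - m \<le> rr \<longrightarrow> rr < B \<longrightarrow> \<not> Cl T B rr h"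
  define C where "C = T div B * B"
  define b where "b = T mod B"
  have CB: "B \<le> C" and TC: "T = C + b" and bB: "b < B"
    using basics[OF B] unfolding C_def b_def by auto
  have pm: "p mod B = p - (C - B)" if "C - B \<le> p" "p < C" for p
    using basics(5)[OF B] that unfolding C_def by simp
  have CS: "Cl T B rr h = (xs {..<C} (\<lambda>p. p mod B = rr \<and> h p) \<noteq> Rw B b rr (\<lambda>i. h (C + i)))" for rr
    using Cl_split[OF B(1)] unfolding C_def b_def by simp
  have tl: "x = C + (x - C)" if "C \<le> x" for x using that by simp
  show "\<not> h x"
  proof (cases "m \<le> b")
    case True
    show ?thesis
    proof (cases "m = 0")
      case True
      show ?thesis
      proof
        assume "h x" then have "T - m \<le> x" "x < T" using sh by auto
        then show False using True by simp
      qed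
    next
      case False
      then have b0: "0 < b" using \<open>m \<le> b\<close> by linarith
      have per0: "\<not> xs {..<C} (\<lambda>p. p mod B = rr \<and> h p)" for rr
      proof (rule xs_none)
        fix p assume "p \<in> {..<C}"
        have "\<not> h p"
        proof
          assume "h p" then have "T - m \<le> p" using sh by blast
          then show False using \<open>p \<in> {..<C}\<close> TC \<open>m \<le> b\<close> by simp
        qed
        then show "\<not> (p mod B = rr \<and> h p)" by simp
      qed
      have "\<forall>p. B - m \<le> p \<longrightarrow> p < B \<longrightarrow> \<not> Rw B b p (\<lambda>i. h (C + i))"
        using r CS per0 by simp
      moreover have "\<forall>i. h (C + i) \<longrightarrow> b - m \<le> i \<and> i < b"
      proof (intro allI impI)
        fix i assume "h (C + i)" then have "T - m \<le> C + i" "C + i < T" using sh by auto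
        then show "b - m \<le> i \<and> i < b" using TC by linarith
      qed
      ultimately have z: "\<not> h (C + i)" for i using propSD[of B b m "\<lambda>i. h (C + i)" i] IH1 b0 True
        unfolding b_def by blast
      show ?thesis
      proof
        assume "h x" then have "T - m \<le> x" using sh by blast
        then have "C \<le> x" using TC True by linarith
        then have "h (C + (x - C))" using \<open>h x\<close> by simp
        then show False using z by blast
      qed
    qed
  next
    case False
    have z: "\<not> h (C + i)" for i
    proof (cases "b = 0")
      case True
      show ?thesis
      proof
        assume "h (C + i)" then have "C + i < T" using sh by blast
        then show False using TC True by simp
      qed
    next
      case b0: False
      have "\<forall>p. B - m \<le> p \<longrightarrow> p < B - m + b \<longrightarrow> \<not> Rw B b p (\<lambda>i. h (C + i))"
      proof (intro allI impI)
        fix p assume p: "B - m \<le> p" "p < B - m + b"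
        have "\<not> xs {..<C} (\<lambda>q. q mod B = p \<and> h q)"
        proof (rule xs_none)
          fix q assume "q \<in> {..<C}"
          show "\<not> (q mod B = p \<and> h q)"
          proof
            assume a: "q mod B = p \<and> h q"
            then have "T - m \<le> q" using sh by blast
            then have "C - B \<le> q" using TC mB by linarith
            then have "q mod B = q - (C - B)" using pm \<open>q \<in> {..<C}\<close> by simp
            then show False using a \<open>T - m \<le> q\<close> p TC CB mB by linarith
          qed
        qed
        moreover have "\<not> Cl T B p h" using r p False bB by simp
        ultimately show "\<not> Rw B b p (\<lambda>i. h (C + i))" using CS by simp
      qed
      moreover have "\<forall>i. h (C + i) \<longrightarrow> i < b"
      proof (intro allI impI)
        fix i assume "h (C + i)" then have "C + i < T" using sh by auto
        then show "i < b" using TC by linarith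
      qed
      moreover have "B - m + b \<le> B" using False mB by linarith
      ultimately show ?thesis using propWD[of B b "B - m" "\<lambda>i. h (C + i)" i] IH2 b0 unfolding b_def by blast
    qed
    show ?thesis
    proof
      assume hx: "h x"
      have xC: "x < C"
      proof (rule ccontr)
        assume "\<not> x < C" then have "h (C + (x - C))" using hx by simp
        then show False using z by blast
      qed
      have xl: "T - m \<le> x" using sh hx by blast
      then have xl2: "C - B \<le> x" using TC mB by linarith
      then have xm: "x mod B = x - (C - B)" using pm xC by simp
      have Rw0: "\<not> Rw B b (x mod B) (\<lambda>i. h (C + i))"
        unfolding Rw_def by (rule xs_none) (use z in simp)
      have "xs {..<C} (\<lambda>p. p mod B = x mod B \<and> h p) = (x \<in> {..<C} \<and> x mod B = x mod B \<and> h x)"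
      proof (rule xs_single)
        show "{p \<in> {..<C}. p mod B = x mod B \<and> h p} \<subseteq> {x}"
        proof
          fix p assume "p \<in> {p \<in> {..<C}. p mod B = x mod B \<and> h p}"
          then have pp: "p mod B = x mod B" "h p" "p < C" by auto
          then have "T - m \<le> p" using sh by blast
          then have "C - B \<le> p" using TC mB by linarith
          then have "p = x" using window_uniq[of "C - B" p B x] pp xl2 xC CB by simp
          then show "p \<in> {x}" by simp
        qed
      qed simp
      then have "Cl T B (x mod B) h" using CS Rw0 hx xC by simp
      moreover have "B - m \<le> x mod B" using xm xl TC mB CB by linarith
      moreover have "x mod B < B" using B(1) by simp
      ultimately show False using r by blast
    qed
  qed
qed


lemma six: "0 < B \<Longrightarrow> B \<le> T \<Longrightarrow> propP T B \<and> propPT T B \<and> propW T B \<and> propWT T B \<and> propS T B \<and> propST T B"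
proof (induction B arbitrary: T rule: less_induct)
  case (less B T)
  have IH: "propP B (T mod B) \<and> propPT B (T mod B) \<and> propW B (T mod B) \<and> propWT B (T mod B) \<and>
      propS B (T mod B) \<and> propST B (T mod B)" if "0 < T mod B"
    using less.IH[of "T mod B" B] less.prems that by simp
  show ?case
    using propP_step[OF less.prems] propPT_step[OF less.prems] propW_step[OF less.prems]
      propWT_step[OF less.prems] propS_step[OF less.prems] propST_step[OF less.prems] IH
    by blast
qed

lemma Qlem:
  assumes B: "0 < B" "B \<le> D" and aD: "a < D"
    and sh: "\<forall>p. h p \<longrightarrow> a \<le> p \<and> p < a + B \<and> p < D"
    and r: "\<forall>r<B. a + B \<le> D + r \<longrightarrow> r \<le> a \<longrightarrow> \<not> Cl D B r h"
  shows "\<not> h a"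
proof -
  define C where "C = D div B * B"
  define b where "b = D mod B"
  have CB: "B \<le> C" and TC: "D = C + b" and bB: "b < B"
    using basics[OF B] unfolding C_def b_def by auto
  have pm: "p mod B = p - (C - B)" if "C - B \<le> p" "p < C" for p
    using basics(5)[OF B] that unfolding C_def by simp
  have CS: "Cl D B rr h = (xs {..<C} (\<lambda>p. p mod B = rr \<and> h p) \<noteq> Rw B b rr (\<lambda>i. h (C + i)))" for rr
    using Cl_split[OF B(1)] unfolding C_def b_def by simp
  have IH: "propP B b \<and> propPT B b \<and> propW B b \<and> propWT B b \<and> propS B b \<and> propST B b" if "0 < b"
    using six[of b B] that bB by simp
  have single: "xs {..<C} (\<lambda>p. p mod B = a mod B \<and> h p) = h a" if "a < C"
  proof -
    have "xs {..<C} (\<lambda>p. p mod B = a mod B \<and> h p) = (a \<in> {..<C} \<and> a mod B = a mod B \<and> h a)"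
    proof (rule xs_single)
      show "{p \<in> {..<C}. p mod B = a mod B \<and> h p} \<subseteq> {a}"
      proof
        fix p assume "p \<in> {p \<in> {..<C}. p mod B = a mod B \<and> h p}"
        then have pp: "p mod B = a mod B" "h p" by auto
        then have "a \<le> p" "p < a + B" using sh by auto
        then have "p = a" using window_uniq[of a p B a] pp B(1) by simp
        then show "p \<in> {a}" by simp
      qed
    qed simp
    then show ?thesis using that by simp
  qed
  have amod: "a mod B \<le> a" by simp
  show ?thesis
  proof (cases "a + B \<le> C")
    case True
    have "\<not> Rw B b (a mod B) (\<lambda>i. h (C + i))"
      unfolding Rw_def
    proof (rule xs_none)
      fix i show "\<not> (G B b (a mod B) i \<and> h (C + i))"
      proof
        assume "G B b (a mod B) i \<and> h (C + i)"
        then have "C + i < a + B" using sh by blast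
        then show False using True by linarith
      qed
    qed
    moreover have "a < C" using True B(1) by linarith
    moreover have "\<not> Cl D B (a mod B) h" using r amod True TC B(1) by simp
    ultimately show ?thesis using CS single by simp
  next
    case nC: False
    show ?thesis
    proof (cases "C \<le> a")
      case True
      define i0 where "i0 = a - C"
      have b0: "0 < b" "i0 < b" using True aD TC unfolding i0_def by linarith+
      have per0: "\<not> xs {..<C} (\<lambda>p. p mod B = rr \<and> h p)" for rr
      proof (rule xs_none)
        fix p assume "p \<in> {..<C}"
        show "\<not> (p mod B = rr \<and> h p)"
        proof
          assume "p mod B = rr \<and> h p" then have "a \<le> p" using sh by blast
          then show False using \<open>p \<in> {..<C}\<close> True by simp
        qed
      qed
      have "\<forall>p. B - (b - i0) \<le> p \<longrightarrow> p < B \<longrightarrow> \<not> Rw B b p (\<lambda>i. h (C + i))"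
      proof (intro allI impI)
        fix p assume p: "B - (b - i0) \<le> p" "p < B"
        then have "a + B \<le> D + p" "p \<le> a" using TC True CB b0 unfolding i0_def by linarith+
        then have "\<not> Cl D B p h" using r p by blast
        then show "\<not> Rw B b p (\<lambda>i. h (C + i))" using CS per0 by simp
      qed
      moreover have "\<forall>i. h (C + i) \<longrightarrow> b - (b - i0) \<le> i \<and> i < b"
      proof (intro allI impI)
        fix i assume "h (C + i)" then have "a \<le> C + i" "C + i < D" using sh by auto
        then show "b - (b - i0) \<le> i \<and> i < b" using TC b0 unfolding i0_def by linarith
      qed
      ultimately have "\<not> h (C + i0)"
        using propSD[of B b "b - i0" "\<lambda>i. h (C + i)" i0] IH b0 by simp
      then show ?thesis using True unfolding i0_def by simp
    next
      case False
      then have aC: "a < C" by simp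
      define al where "al = a mod B"
      have al: "al = a - (C - B)" "al < B" using pm[of a] aC nC B(1) unfolding al_def by simp_all
      have z: "\<not> h (C + i)" for i
      proof (cases "b = 0")
        case True
        show ?thesis
        proof
          assume "h (C + i)" then have "C + i < D" using sh by blast
          then show False using TC True by simp
        qed
      next
        case b0: False
        have rw0: "\<not> Rw B b rr (\<lambda>i. h (C + i))" if rr: "rr < al" "al - b \<le> rr" for rr
        proof -
          have "\<not> xs {..<C} (\<lambda>p. p mod B = rr \<and> h p)"
          proof (rule xs_none)
            fix p assume "p \<in> {..<C}"
            show "\<not> (p mod B = rr \<and> h p)"
            proof
              assume a: "p mod B = rr \<and> h p"
              then have "a \<le> p" using sh by blast
              then have "p mod B = p - (C - B)" using pm \<open>p \<in> {..<C}\<close> nC by simp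
              then show False using a \<open>a \<le> p\<close> al rr nC by linarith
            qed
          qed
          moreover have "a + B \<le> D + rr" "rr \<le> a" "rr < B" using al rr TC nC aC CB by linarith+
          then have "\<not> Cl D B rr h" using r by blast
          ultimately show ?thesis using CS by simp
        qed
        have supp: "\<forall>i. h (C + i) \<longrightarrow> i < al \<and> i < b"
        proof (intro allI impI)
          fix i assume "h (C + i)" then have "C + i < a + B" "C + i < D" using sh by auto
          then show "i < al \<and> i < b" using al TC nC CB by linarith
        qed
        show ?thesis
        proof (cases "b \<le> al")
          case True
          have "\<forall>p. al - b \<le> p \<longrightarrow> p < al - b + b \<longrightarrow> \<not> Rw B b p (\<lambda>i. h (C + i))"
            using rw0 True by simp
          moreover have "al - b + b \<le> B" using True al by linarith
          ultimately show ?thesis using propWD[of B b "al - b" "\<lambda>i. h (C + i)" i] IH b0 supp by simp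
        next
          case False
          have "\<forall>p<al. \<not> Rw B b p (\<lambda>i. h (C + i))" using rw0 False by simp
          then show ?thesis using propPD[of B b al "\<lambda>i. h (C + i)" i] IH b0 supp False by simp
        qed
      qed
      have "\<not> Rw B b al (\<lambda>i. h (C + i))"
        unfolding Rw_def by (rule xs_none) (use z in simp)
      moreover have "a + B \<le> D + al" "al \<le> a" "al < B" using al TC aC nC CB by linarith+
      then have "\<not> Cl D B al h" using r by blast
      ultimately show ?thesis using CS single aC unfolding al_def by simp
    qed
  qed
qed


definition par :: "nat \<Rightarrow> nat \<Rightarrow> (nat \<Rightarrow> nat list) \<Rightarrow> nat \<Rightarrow> nat \<Rightarrow> bool" where
  "par D B s t r = odd (card {p. p < D \<and> D + r \<le> t + p \<and> G D B p r \<and> s (t + p - (D + r)) ! p = 1})"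

definition enc :: "nat \<Rightarrow> nat \<Rightarrow> nat \<Rightarrow> (nat \<Rightarrow> nat list) \<Rightarrow> nat list" where
  "enc D B t s = map (\<lambda>j. s t ! j) [0..<D] @ map (\<lambda>r. if par D B s t r then 1 else 0) [0..<B]"

lemma odd_card_symdiff:
  assumes "finite A" "finite A'"
  shows "odd (card ((A - A') \<union> (A' - A))) = (odd (card A) \<noteq> odd (card A'))"
proof -
  have c1: "card (A - A') = card A - card (A \<inter> A')" using assms by (simp add: card_Diff_subset_Int)
  have c2: "card (A \<inter> A') \<le> card A" using assms by (simp add: card_mono)
  have c3: "card (A' - A) = card A' - card (A \<inter> A')" using assms
    by (simp add: card_Diff_subset_Int Int_commute)
  have c4: "card (A \<inter> A') \<le> card A'" using assms by (simp add: card_mono)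
  have c5: "card ((A - A') \<union> (A' - A)) = card (A - A') + card (A' - A)"
    using assms by (intro card_Un_disjoint) auto
  have e: "card (A - A') + card (A' - A) + 2 * card (A \<inter> A') = card A + card A'"
    using c1 c2 c3 c4 by linarith
  have "odd (card (A - A') + card (A' - A)) = odd (card (A - A') + card (A' - A) + 2 * card (A \<inter> A'))"
    by simp
  also have "\<dots> = odd (card A + card A')" using e by simp
  also have "\<dots> = (odd (card A) \<noteq> odd (card A'))" by simp
  finally show ?thesis unfolding c5 .
qed

lemma burst_after:
  assumes "admissible_burst B W E" "E i" "i + B \<le> t" "t < i + W"
  shows "\<not> E t"
proof
  assume Et: "E t"
  obtain j l where jl: "l \<le> B" "{t. i \<le> t \<and> t < i + W \<and> E t} = {j..<j + l}"
    using assms(1) unfolding admissible_burst_def by blast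
  have "i \<in> {t. i \<le> t \<and> t < i + W \<and> E t}" using assms by simp
  then have "i \<in> {j..<j + l}" using jl(2) by blast
  moreover have "t \<in> {t. i \<le> t \<and> t < i + W \<and> E t}" using assms Et by simp
  then have "t \<in> {j..<j + l}" using jl(2) by blast
  ultimately show False using jl(1) assms(3) by simp
qed

lemma enc_len: "length (enc D B t s) = D + B" by (simp add: enc_def)

lemma enc_nth_sys: "j < D \<Longrightarrow> enc D B t s ! j = s t ! j"
  by (simp add: enc_def nth_append)

lemma enc_nth_par: "r < B \<Longrightarrow> enc D B t s ! (D + r) = (if par D B s t r then 1 else 0)"
  by (simp add: enc_def nth_append)


lemma take_enc: assumes "length (s t) = D" shows "take D (enc D B t s) = s t"
proof -
  have "map (\<lambda>j. s t ! j) [0..<D] = s t" using map_nth[of "s t"] assms by simp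
  then show ?thesis using assms by (simp add: enc_def)
qed

lemma uniq_step:
  assumes B: "0 < B" "B \<le> D" and DT: "D \<le> T" and DW: "D < W"
    and vs: "\<forall>j. s j \<in> alph 2 D" and vs': "\<forall>j. s' j \<in> alph 2 D"
    and adm: "admissible_burst B W E"
    and agree: "\<forall>t \<le> i + T. \<not> E t \<longrightarrow> enc D B t s = enc D B t s'"
    and IH: "\<forall>j<i. s j = s' j"
  shows "s i = s' i"
proof -
  have len: "length (s t) = D" "length (s' t) = D" for t using vs vs' unfolding alph_def by auto
  have bit: "s t ! p < 2" "s' t ! p < 2" if "p < D" for t p
  proof -
    have m: "s t ! p \<in> set (s t)" "s' t ! p \<in> set (s' t)" using that len by simp_all
    have "set (s t) \<subseteq> {..<2}" "set (s' t) \<subseteq> {..<2}" using vs vs' unfolding alph_def by blast+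
    then show "s t ! p < 2" "s' t ! p < 2" using m by auto
  qed
  show ?thesis
  proof (cases "E i")
    case False
    then have "enc D B i s = enc D B i s'" using agree by simp
    then have "take D (enc D B i s) = take D (enc D B i s')" by simp
    then show ?thesis using take_enc[of s i D B] take_enc[of s' i D B] len by simp
  next
    case True
    show ?thesis
    proof (rule nth_equalityI)
      show "length (s i) = length (s' i)" using len by simp
      fix j0 assume "j0 < length (s i)"
      then have j0: "j0 < D" using len by simp
      define h where "h p = (p < D \<and> j0 \<le> i + p \<and> (s (i + p - j0) ! p = 1) \<noteq> (s' (i + p - j0) ! p = 1))" for p
      have supp: "\<forall>p. h p \<longrightarrow> j0 \<le> p \<and> p < j0 + B \<and> p < D"
      proof (intro allI impI)
        fix p assume hp: "h p"
        then have pD: "p < D" "j0 \<le> i + p" unfolding h_def by auto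
        have "j0 \<le> p"
        proof (rule ccontr)
          assume "\<not> j0 \<le> p"
          then have "i + p - j0 < i" using pD by linarith
          then have "s (i + p - j0) = s' (i + p - j0)" using IH by blast
          then show False using hp unfolding h_def by simp
        qed
        moreover have "p < j0 + B"
        proof (rule ccontr)
          assume "\<not> p < j0 + B"
          define t where "t = i + p - j0"
          have "i + B \<le> t" "t < i + W" "t \<le> i + T" using \<open>\<not> p < j0 + B\<close> pD DW DT unfolding t_def by linarith+
          then have "\<not> E t" using burst_after[OF adm True] by blast
          then have "enc D B t s = enc D B t s'" using agree \<open>t \<le> i + T\<close> by blast
          then have "enc D B t s ! p = enc D B t s' ! p" by simp
          then have "s t ! p = s' t ! p" using enc_nth_sys[OF pD(1)] by metis
          then show False using hp unfolding h_def t_def by simp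
        qed
        ultimately show "j0 \<le> p \<and> p < j0 + B \<and> p < D" using pD by simp
      qed
      have cl: "\<forall>r<B. j0 + B \<le> D + r \<longrightarrow> r \<le> j0 \<longrightarrow> \<not> Cl D B r h"
      proof (intro allI impI)
        fix r assume r: "r < B" "j0 + B \<le> D + r" "r \<le> j0"
        define t where "t = i + D + r - j0"
        have "i + B \<le> t" "t < i + W" "t \<le> i + T" using r j0 DW DT unfolding t_def by linarith+
        then have "\<not> E t" using burst_after[OF adm True] by blast
        then have "enc D B t s = enc D B t s'" using agree \<open>t \<le> i + T\<close> by blast
        then have "enc D B t s ! (D + r) = enc D B t s' ! (D + r)" by simp
        then have pe: "par D B s t r = par D B s' t r" using enc_nth_par[OF r(1)] by (metis zero_neq_one)
        have key: "(D + r \<le> t + p) = (j0 \<le> i + p)" for p unfolding t_def using j0 by linarith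
        have key2: "t + p - (D + r) = i + p - j0" if "j0 \<le> i + p" for p unfolding t_def using j0 that by linarith
        define A where "A = {p. p < D \<and> j0 \<le> i + p \<and> G D B p r \<and> s (i + p - j0) ! p = 1}"
        define A' where "A' = {p. p < D \<and> j0 \<le> i + p \<and> G D B p r \<and> s' (i + p - j0) ! p = 1}"
        have pA: "par D B s t r = odd (card A)" unfolding par_def A_def
          by (rule arg_cong[where f="\<lambda>S. odd (card S)"]) (use key key2 in auto)
        have pA': "par D B s' t r = odd (card A')" unfolding par_def A'_def
          by (rule arg_cong[where f="\<lambda>S. odd (card S)"]) (use key key2 in auto)
        have "{p \<in> {..<D}. G D B p r \<and> h p} = (A - A') \<union> (A' - A)"
          unfolding A_def A'_def h_def by auto
        moreover have "finite A" "finite A'" unfolding A_def A'_def by auto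
        ultimately have "Cl D B r h = (par D B s t r \<noteq> par D B s' t r)"
          unfolding Cl_def xs_def pA pA' using odd_card_symdiff by simp
        then show "\<not> Cl D B r h" using pe by simp
      qed
      have "\<not> h j0" using Qlem[OF B j0 supp cl] .
      then have "(s i ! j0 = 1) = (s' i ! j0 = 1)" using j0 unfolding h_def by simp
      moreover have "s i ! j0 < 2" "s' i ! j0 < 2" using bit j0 by auto
      ultimately show "s i ! j0 = s' i ! j0" by linarith
    qed
  qed
qed


definition dec :: "nat \<Rightarrow> nat \<Rightarrow> nat \<Rightarrow> nat \<Rightarrow> nat \<Rightarrow> (nat \<Rightarrow> nat list option) \<Rightarrow> nat list" where
  "dec D B W T i y = (SOME v. \<exists>s E. (\<forall>j. s j \<in> alph 2 D) \<and> admissible_burst B W E \<and>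
      (\<forall>j \<le> i + T. channel_out E (\<lambda>j. enc D B j s) j = y j) \<and> s i = v)"

lemma big_code:
  assumes B: "0 < B" "B \<le> D" and DT: "D \<le> T" and DW: "D < W"
  shows "streaming_code 2 D (D + B) B W T (\<lambda>i s. enc D B i s) (dec D B W T)"
  unfolding streaming_code_def
proof (intro conjI allI impI)
  fix i s s' assume eq: "\<forall>j\<le>i. s j = (s' :: nat \<Rightarrow> nat list) j"
  have "par D B s i r = par D B s' i r" for r
    unfolding par_def
  proof (rule arg_cong[where f="\<lambda>S. odd (card S)"], rule Collect_cong)
    fix p
    have "p < D \<Longrightarrow> i + p - (D + r) \<le> i" by linarith
    then show "(p < D \<and> D + r \<le> i + p \<and> G D B p r \<and> s (i + p - (D + r)) ! p = 1) =
          (p < D \<and> D + r \<le> i + p \<and> G D B p r \<and> s' (i + p - (D + r)) ! p = 1)" using eq by auto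
  qed
  then show "enc D B i s = enc D B i s'" unfolding enc_def using eq by simp
next
  fix i s assume vs: "\<forall>j. (s :: nat \<Rightarrow> nat list) j \<in> alph 2 D"
  have len: "length (s i) = D" and st: "set (s i) \<subseteq> {..<2}" using vs unfolding alph_def by auto
  have "set (enc D B i s) \<subseteq> {..<2}"
  proof
    fix x assume "x \<in> set (enc D B i s)"
    then consider (a) "x \<in> set (map (\<lambda>j. s i ! j) [0..<D])" | (b) "x \<in> set (map (\<lambda>r. if par D B s i r then 1 else (0::nat)) [0..<B])"
      unfolding enc_def by auto
    then show "x \<in> {..<2}"
    proof cases
      case a
      then obtain j where "j < D" "x = s i ! j" by auto
      then have "x \<in> set (s i)" using len by simp
      then show ?thesis using st by blast
    next
      case b then show ?thesis by auto
    qed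
  qed
  then show "enc D B i s \<in> alph 2 (D + B)" unfolding alph_def using enc_len by simp
next
  fix i and y y' :: "nat \<Rightarrow> nat list option" assume eq: "\<forall>j\<le>i + T. y j = y' j"
  have "(\<lambda>v. \<exists>s E. (\<forall>j. s j \<in> alph 2 D) \<and> admissible_burst B W E \<and>
      (\<forall>j \<le> i + T. channel_out E (\<lambda>j. enc D B j s) j = y j) \<and> s i = v) =
    (\<lambda>v. \<exists>s E. (\<forall>j. s j \<in> alph 2 D) \<and> admissible_burst B W E \<and>
      (\<forall>j \<le> i + T. channel_out E (\<lambda>j. enc D B j s) j = y' j) \<and> s i = v)"
    using eq by auto
  then show "dec D B W T i y = dec D B W T i y'" unfolding dec_def by simp
next
  fix s E i
  assume vs: "\<forall>j. (s :: nat \<Rightarrow> nat list) j \<in> alph 2 D" and adm: "admissible_burst B W E"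
  define y where "y = channel_out E (\<lambda>j. enc D B j s)"
  let ?P = "\<lambda>v. \<exists>s E. (\<forall>j. s j \<in> alph 2 D) \<and> admissible_burst B W E \<and>
      (\<forall>j \<le> i + T. channel_out E (\<lambda>j. enc D B j s) j = y j) \<and> s i = v"
  have "?P (s i)" using vs adm unfolding y_def by blast
  then have "?P (dec D B W T i y)" unfolding dec_def by (rule someI)
  then obtain s' E' where vs': "\<forall>j. s' j \<in> alph 2 D" and ag: "\<forall>j \<le> i + T. channel_out E' (\<lambda>j. enc D B j s') j = y j"
    and si: "s' i = dec D B W T i y" by blast
  have agree: "\<forall>t \<le> i + T. \<not> E t \<longrightarrow> enc D B t s = enc D B t s'"
  proof (intro allI impI)
    fix t assume "t \<le> i + T" "\<not> E t"
    then have "channel_out E' (\<lambda>j. enc D B j s') t = Some (enc D B t s)"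
      using ag unfolding y_def channel_out_def by simp
    then show "enc D B t s = enc D B t s'" unfolding channel_out_def by (simp split: if_splits)
  qed
  have main: "j \<le> i \<Longrightarrow> s j = s' j" for j
  proof (induction j rule: less_induct)
    case (less j)
    have "\<forall>t \<le> j + T. \<not> E t \<longrightarrow> enc D B t s = enc D B t s'" using agree less.prems by auto
    moreover have "\<forall>j'<j. s j' = s' j'" using less by auto
    ultimately show ?case using uniq_step[OF B DT DW vs vs' adm] by blast
  qed
  show "dec D B W T i (channel_out E (\<lambda>j. enc D B j s)) = s i"
    using main[of i] si unfolding y_def by simp
qed

theorem proposition1:
  fixes B W T :: nat
  assumes "B > 0" and "W > 0" and "T > 0" and "W \<ge> B + 1"
  shows "let Teff = min (W - 1) T;
             R = (if Teff \<ge> B then real Teff / real (Teff + B) else 0)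
         in \<exists>q k n f g. primepow q \<and> n > 0 \<and> streaming_code q k n B W T f g
                        \<and> real k / real n = R"
proof -
  define D where "D = min (W - 1) T"
  have p2: "primepow (2::nat)" by simp
  show ?thesis
  proof (cases "B \<le> D")
    case True
    have "streaming_code 2 D (D + B) B W T (\<lambda>i s. enc D B i s) (dec D B W T)"
      by (rule big_code) (use True assms in \<open>auto simp: D_def\<close>)
    then show ?thesis unfolding Let_def D_def[symmetric] using True p2 assms
      by (intro exI[of _ 2] exI[of _ D] exI[of _ "D + B"]) auto
  next
    case False
    have "streaming_code 2 0 1 B W T (\<lambda>i s. [0]) (\<lambda>i y. [])"
      unfolding streaming_code_def alph_def by auto
    then show ?thesis unfolding Let_def D_def[symmetric] using False p2
      by (intro exI[of _ 2] exI[of _ 0] exI[of _ 1]) auto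
  qed
qed

end
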